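(* Let $\mathbf{x}_1,\dots,\mathbf{x}_n$ be i.i.d. $N_p(\mathbf{0},\boldsymbol{\Sigma})$ with $\boldsymbol{\Sigma}=(r^{|i-j|})_{1\le i,j\le p}$, $r=r_n\in[0,1)$ arbitrary, $p=p_n\to\infty$ and $\log p=o(n)$. Then $$\max_{1\le i<j\le p}\sqrt n\,\hat\rho_{i,j}-\max_{1\le i<j\le p}\Big\{\sqrt n\,r^{|i-j|}+\frac1{\sqrt n}\sum_{k=1}^n\Big[x_{ki}x_{kj}-\frac{r^{|i-j|}}{2}(x_{ki}^2+x_{kj}^2)\Big]\Big\}=O_{\mathbb P}\Big(\frac{\log p}{\sqrt n}\Big).$$
   Context: Write $\mathbf{x}_k=(x_{k1},\dots,x_{kp})^T$ and $\hat\rho_{i,j}=\frac{\sum_{k=1}^n x_{ki}x_{kj}}{\sqrt{\sum_{k=1}^n x_{ki}^2\sum_{k=1}^n x_{kj}^2}}$. $\xi_n=O_{\mathbb P}(a_n)$ means $\lim_{C\to\infty}\limsup_{n}\mathbb P(|\xi_n/a_n|>C)=0$. *)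

theory Defs
  imports "HOL-Probability.Probability" "HOL-Library.Landau_Symbols"
begin

definition ar1_cov :: "real \<Rightarrow> nat \<Rightarrow> nat \<Rightarrow> real" where
  "ar1_cov r i j = r ^ nat \<bar>int i - int j\<bar>"

text \<open>Sample correlation (uncentred) of columns i and j of the n x p data matrix x,
  where x k i is the i-th coordinate of the k-th observation (k = 1..n).\<close>
definition rho_hat :: "nat \<Rightarrow> (nat \<Rightarrow> nat \<Rightarrow> real) \<Rightarrow> nat \<Rightarrow> nat \<Rightarrow> real" where
  "rho_hat n x i j =
     (\<Sum>k=1..n. x k i * x k j) /
     sqrt ((\<Sum>k=1..n. (x k i)\<^sup>2) * (\<Sum>k=1..n. (x k j)\<^sup>2))"

definition centered_normal :: "real \<Rightarrow> real measure" where
  "centered_normal v = (if v = 0 then return borel 0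
                        else density lborel (normal_density 0 (sqrt v)))"

definition centered_gaussian_vector ::
  "'a measure \<Rightarrow> nat \<Rightarrow> (nat \<Rightarrow> nat \<Rightarrow> real) \<Rightarrow> ('a \<Rightarrow> nat \<Rightarrow> real) \<Rightarrow> bool" where
  "centered_gaussian_vector M p S Y \<longleftrightarrow>
     (\<forall>i\<in>{1..p}. (\<lambda>\<omega>. Y \<omega> i) \<in> borel_measurable M) \<and>
     (\<forall>c :: nat \<Rightarrow> real.
        distr M borel (\<lambda>\<omega>. \<Sum>i=1..p. c i * Y \<omega> i) =
        centered_normal (\<Sum>i=1..p. \<Sum>j=1..p. c i * S i j * c j))"

definition bounded_in_prob ::
  "(nat \<Rightarrow> 'a measure) \<Rightarrow> (nat \<Rightarrow> 'a \<Rightarrow> real) \<Rightarrow> (nat \<Rightarrow> real) \<Rightarrow> bool" where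
  "bounded_in_prob M xi a \<longleftrightarrow>
     ((\<lambda>C::real. limsup (\<lambda>n. ereal (measure (M n)
          {\<omega> \<in> space (M n). \<bar>xi n \<omega> / a n\<bar> > C}))) \<longlongrightarrow> 0) at_top"

end

theory Submission
  imports Defs
begin

lemma gauss_mgf:
  fixes sg s :: real
  assumes sp: "sg > 0" and wp: "1 - 2 * s * sg\<^sup>2 > 0"
  shows "(\<integral>\<^sup>+y. ennreal (exp (s * y\<^sup>2)) \<partial>density lborel (normal_density 0 sg))
         = ennreal (1 / sqrt (1 - 2 * s * sg\<^sup>2))"
proof -
  define w where "w = 1 - 2 * s * sg\<^sup>2"
  have w: "w > 0" using wp w_def by simp
  define tau where "tau = sg / sqrt w"
  have taup: "tau > 0" using sp w by (simp add: tau_def)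
  have tau2: "tau\<^sup>2 = sg\<^sup>2 / w" using w by (simp add: tau_def power_divide)
  have sq: "sqrt (2 * pi * tau\<^sup>2) = sqrt (2*pi* sg\<^sup>2) / sqrt w"
    using w by (simp add: tau2 real_sqrt_divide)
  have ex: "-(y - 0)\<^sup>2 / (2 * tau\<^sup>2) = -(y - 0)\<^sup>2 / (2 * sg\<^sup>2) + s * y\<^sup>2" for y
    using w sp by (simp add: tau2 w_def field_simps)
  have pt: "normal_density 0 sg y * exp (s * y\<^sup>2) = (1/sqrt w) * normal_density 0 tau y" for y
  proof -
    have "(1/sqrt w) * normal_density 0 tau y
        = (1/sqrt w) * (1 / (sqrt (2*pi* sg\<^sup>2) / sqrt w)) * exp (-(y - 0)\<^sup>2 / (2 * sg\<^sup>2) + s * y\<^sup>2)"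
      unfolding normal_density_def sq ex by simp
    also have "\<dots> = 1 / sqrt (2*pi* sg\<^sup>2) * exp (-(y - 0)\<^sup>2 / (2 * sg\<^sup>2) + s * y\<^sup>2)"
      using w by (simp add: field_simps)
    also have "\<dots> = normal_density 0 sg y * exp (s * y\<^sup>2)"
      unfolding normal_density_def by (simp add: exp_add[symmetric])
    finally show ?thesis by simp
  qed
  have "(\<integral>\<^sup>+y. ennreal (exp (s * y\<^sup>2)) \<partial>density lborel (normal_density 0 sg))
      = (\<integral>\<^sup>+y. ennreal (normal_density 0 sg y) * ennreal (exp (s * y\<^sup>2)) \<partial>lborel)"
    by (subst nn_integral_density) auto
  also have "\<dots> = (\<integral>\<^sup>+y. ennreal (1/sqrt w) * ennreal (normal_density 0 tau y) \<partial>lborel)"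
  proof (intro nn_integral_cong)
    fix y
    have "ennreal (normal_density 0 sg y) * ennreal (exp (s * y\<^sup>2)) = ennreal (normal_density 0 sg y * exp (s * y\<^sup>2))"
      by (rule ennreal_mult[symmetric]) auto
    also have "\<dots> = ennreal ((1/sqrt w) * normal_density 0 tau y)" by (simp only: pt)
    also have "\<dots> = ennreal (1/sqrt w) * ennreal (normal_density 0 tau y)"
      by (rule ennreal_mult) (use w in auto)
    finally show "ennreal (normal_density 0 sg y) * ennreal (exp (s * y\<^sup>2)) = ennreal (1/sqrt w) * ennreal (normal_density 0 tau y)" .
  qed
  also have "\<dots> = ennreal (1/sqrt w) * (\<integral>\<^sup>+y. ennreal (normal_density 0 tau y) \<partial>lborel)"
    by (subst nn_integral_cmult) auto
  also have "(\<integral>\<^sup>+y. ennreal (normal_density 0 tau y) \<partial>lborel) = 1"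
    using integrable_normal_density[of tau 0] integral_normal_density[of tau 0] taup
    by (subst nn_integral_eq_integral) auto
  finally show ?thesis by (simp add: w_def)
qed

lemma sum_sq_mgf:
  assumes P: "prob_space M" and fin: "finite I"
    and ind: "prob_space.indep_vars M (\<lambda>_. borel) Y I"
    and dist: "\<And>k. k \<in> I \<Longrightarrow> distr M borel (Y k) = density lborel (normal_density 0 sg)"
    and sp: "sg > 0" and wp: "1 - 2 * s * sg\<^sup>2 > 0"
  shows "(\<integral>\<^sup>+\<omega>. ennreal (exp (s * (\<Sum>k\<in>I. (Y k \<omega>)\<^sup>2))) \<partial>M)
       = ennreal ((1 / sqrt (1 - 2 * s * sg\<^sup>2)) ^ card I)"
proof -
  interpret prob_space M by (rule P)
  have rv: "k \<in> I \<Longrightarrow> Y k \<in> borel_measurable M" for k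
    using ind by (auto simp: indep_vars_def)
  have ind2: "indep_vars (\<lambda>_. borel) (\<lambda>k \<omega>. ennreal (exp (s * (Y k \<omega>)\<^sup>2))) I"
    by (rule indep_vars_compose2[OF ind]) auto
  have "(\<integral>\<^sup>+\<omega>. ennreal (exp (s * (\<Sum>k\<in>I. (Y k \<omega>)\<^sup>2))) \<partial>M)
      = (\<integral>\<^sup>+\<omega>. (\<Prod>k\<in>I. ennreal (exp (s * (Y k \<omega>)\<^sup>2))) \<partial>M)"
    by (intro nn_integral_cong) (simp add: sum_distrib_left exp_sum[OF fin] prod_ennreal)
  also have "\<dots> = (\<Prod>k\<in>I. \<integral>\<^sup>+\<omega>. ennreal (exp (s * (Y k \<omega>)\<^sup>2)) \<partial>M)"
    by (rule indep_vars_nn_integral[OF fin ind2]) auto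
  also have "\<dots> = (\<Prod>k\<in>I. ennreal (1 / sqrt (1 - 2 * s * sg\<^sup>2)))"
  proof (intro prod.cong refl)
    fix k assume k: "k \<in> I"
    have "(\<integral>\<^sup>+\<omega>. ennreal (exp (s * (Y k \<omega>)\<^sup>2)) \<partial>M)
        = (\<integral>\<^sup>+y. ennreal (exp (s * y\<^sup>2)) \<partial>distr M borel (Y k))"
      using rv[OF k] by (subst nn_integral_distr) auto
    also have "\<dots> = ennreal (1 / sqrt (1 - 2 * s * sg\<^sup>2))"
      unfolding dist[OF k] by (rule gauss_mgf[OF sp wp])
    finally show "(\<integral>\<^sup>+\<omega>. ennreal (exp (s * (Y k \<omega>)\<^sup>2)) \<partial>M) = ennreal (1 / sqrt (1 - 2 * s * sg\<^sup>2))" .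
  qed
  also have "\<dots> = ennreal ((1 / sqrt (1 - 2 * s * sg\<^sup>2)) ^ card I)"
    using wp by (simp add: ennreal_power)
  finally show ?thesis .
qed

lemma inv_sqrt_pow: "w > 0 \<Longrightarrow> (1 / sqrt w) ^ N = exp (- (real N * ln w / 2))"
proof -
  assume w: "w > 0"
  have "sqrt w = exp (ln w / 2)"
    using w by (intro real_sqrt_unique) (auto simp: power2_eq_square exp_add[symmetric])
  then have "1 / sqrt w = exp (- (ln w / 2))" by (simp add: exp_minus field_simps)
  then show ?thesis by (simp add: exp_of_nat_mult[symmetric])
qed

lemma upper_num:
  fixes t N :: real assumes "0 < t" "t \<le> 1" "N \<ge> 0" and v: "v > 0"
  shows "exp (- (t / (8 * v)) * (N * v * (1 + t))) * exp (- (N * ln (1 - 2 * (t / (8 * v)) * v) / 2))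
         \<le> exp (- (N * t\<^sup>2 / 16))"
proof -
  have e: "2 * (t / (8 * v)) * v = t / 4" using v by simp
  have l: "- (t/4) - 2 * (t/4)\<^sup>2 \<le> ln (1 - t/4)"
    by (rule ln_one_minus_pos_lower_bound) (use assms in auto)
  have e2: "- (t / (8 * v)) * (N * v * (1 + t)) = N * (- t / 8 - t\<^sup>2/8)" using v
    by (simp add: power2_eq_square field_simps)
  have "(- t / 8 - t\<^sup>2/8) - ln (1 - t/4) / 2 \<le> - t\<^sup>2/16"
    using l by (simp add: power2_eq_square field_simps)
  then have "N * ((- t / 8 - t\<^sup>2/8) - ln (1 - t/4) / 2) \<le> N * (- t\<^sup>2/16)"
    using assms by (intro mult_left_mono) auto
  then have "N * (- t / 8 - t\<^sup>2/8) + (- (N * ln (1 - t / 4) / 2)) \<le> - (N * t\<^sup>2 / 16)"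
    by (simp add: algebra_simps)
  then show ?thesis unfolding e e2
    by (simp add: exp_add[symmetric])
qed

lemma lower_num:
  fixes t N :: real assumes "0 < t" "t \<le> 1" "N \<ge> 0" and v: "v > 0"
  shows "exp ((t / (8 * v)) * (N * v * (1 - t))) * exp (- (N * ln (1 - 2 * (- (t / (8 * v))) * v) / 2))
         \<le> exp (- (N * t\<^sup>2 / 16))"
proof -
  have e: "1 - 2 * (- (t / (8 * v))) * v = 1 + t / 4" using v by simp
  have l: "(t/4) - (t/4)\<^sup>2 \<le> ln (1 + t/4)"
    by (rule ln_one_plus_pos_lower_bound) (use assms in auto)
  have e2: "(t / (8 * v)) * (N * v * (1 - t)) = N * (t / 8 - t\<^sup>2/8)" using v
    by (simp add: power2_eq_square field_simps)
  have t2: "t\<^sup>2 \<ge> 0" by simp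
  have "(t / 8 - t\<^sup>2/8) - ln (1 + t/4) / 2 \<le> - t\<^sup>2/16"
    using l by (simp add: power2_eq_square field_simps) (use mult_nonneg_nonneg[of t t] assms in linarith)
  then have "N * ((t / 8 - t\<^sup>2/8) - ln (1 + t/4) / 2) \<le> N * (- t\<^sup>2/16)"
    using assms by (intro mult_left_mono) auto
  then have "N * (t / 8 - t\<^sup>2/8) + (- (N * ln (1 + t / 4) / 2)) \<le> - (N * t\<^sup>2 / 16)"
    by (simp add: algebra_simps)
  then show ?thesis unfolding e e2
    by (simp add: exp_add[symmetric])
qed

lemma chi_tail:
  assumes P: "prob_space M" and fin: "finite I"
    and ind: "prob_space.indep_vars M (\<lambda>_. borel) Y I"
    and dist: "\<And>k. k \<in> I \<Longrightarrow> distr M borel (Y k) = density lborel (normal_density 0 (sqrt v))"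
    and v: "v > 0" and t: "0 < t" "t \<le> 1"
  shows "measure M {\<omega>\<in>space M. \<bar>(\<Sum>k\<in>I. (Y k \<omega>)\<^sup>2) - real (card I) * v\<bar> > real (card I) * t * v}
         \<le> 2 * exp (- (real (card I) * t\<^sup>2 / 16))"
proof -
  interpret prob_space M by (rule P)
  define N where "N = real (card I)"
  define Z where "Z = (\<lambda>\<omega>. \<Sum>k\<in>I. (Y k \<omega>)\<^sup>2)"
  define s where "s = t / (8 * v)"
  have s: "s > 0" using t v by (simp add: s_def)
  have rv[measurable]: "k \<in> I \<Longrightarrow> Y k \<in> borel_measurable M" for k
    using ind by (auto simp: indep_vars_def)
  have Zm[measurable]: "Z \<in> borel_measurable M"
    unfolding Z_def by (intro borel_measurable_sum borel_measurable_power) auto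
  have sg: "sqrt v > 0" "(sqrt v)\<^sup>2 = v" using v by auto
  have N: "N \<ge> 0" by (simp add: N_def)
  have mgf: "(\<integral>\<^sup>+\<omega>. ennreal (exp (s' * Z \<omega>)) \<partial>M) = ennreal (exp (- (N * ln (1 - 2 * s' * v) / 2)))"
    if "1 - 2 * s' * v > 0" for s'
  proof -
    have "(\<integral>\<^sup>+\<omega>. ennreal (exp (s' * Z \<omega>)) \<partial>M) = ennreal ((1 / sqrt (1 - 2 * s' * (sqrt v)\<^sup>2)) ^ card I)"
      unfolding Z_def by (rule sum_sq_mgf[OF P fin ind dist sg(1)]) (use that sg in auto)
    also have "\<dots> = ennreal (exp (- (N * ln (1 - 2 * s' * v) / 2)))"
      using that sg by (simp add: inv_sqrt_pow N_def)
    finally show ?thesis .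
  qed
  have ind_sp: "(\<integral>\<^sup>+\<omega>. ennreal (exp (s' * Z \<omega>)) * indicator (space M) \<omega> \<partial>M) = (\<integral>\<^sup>+\<omega>. ennreal (exp (s' * Z \<omega>)) \<partial>M)" for s'
    by (intro nn_integral_cong) auto
  have up: "measure M {\<omega>\<in>space M. Z \<omega> \<ge> N * v * (1 + t)} \<le> exp (- (N * t\<^sup>2 / 16))"
  proof -
    have "emeasure M {\<omega>\<in>space M. Z \<omega> \<ge> N * v * (1 + t)}
        \<le> ennreal (exp (- s * (N * v * (1 + t)))) * (\<integral>\<^sup>+\<omega>. ennreal (exp (s * Z \<omega>)) * indicator (space M) \<omega> \<partial>M)"
      by (rule Chernoff_ineq_nn_integral_ge[OF s]) auto
    also have "\<dots> = ennreal (exp (- s * (N * v * (1 + t))) * exp (- (N * ln (1 - 2 * s * v) / 2)))"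
      unfolding ind_sp using t v by (subst mgf) (auto simp: s_def ennreal_mult)
    also have "\<dots> \<le> ennreal (exp (- (N * t\<^sup>2 / 16)))"
      unfolding s_def by (rule ennreal_leI, rule upper_num) (use t N v in auto)
    finally show ?thesis by (simp add: emeasure_eq_measure ennreal_le_iff)
  qed
  have lo: "measure M {\<omega>\<in>space M. Z \<omega> \<le> N * v * (1 - t)} \<le> exp (- (N * t\<^sup>2 / 16))"
  proof -
    have "emeasure M {\<omega>\<in>space M. Z \<omega> \<le> N * v * (1 - t)}
        \<le> ennreal (exp (s * (N * v * (1 - t)))) * (\<integral>\<^sup>+\<omega>. ennreal (exp (- s * Z \<omega>)) * indicator (space M) \<omega> \<partial>M)"
      by (rule Chernoff_ineq_nn_integral_le[OF s]) auto
    also have "\<dots> = ennreal (exp (s * (N * v * (1 - t))) * exp (- (N * ln (1 - 2 * (- s) * v) / 2)))"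
      unfolding ind_sp using t v by (subst mgf) (auto simp: s_def ennreal_mult)
    also have "\<dots> \<le> ennreal (exp (- (N * t\<^sup>2 / 16)))"
      unfolding s_def by (rule ennreal_leI, rule lower_num) (use t N v in auto)
    finally show ?thesis by (simp add: emeasure_eq_measure ennreal_le_iff)
  qed
  have sub: "{\<omega>\<in>space M. \<bar>Z \<omega> - N * v\<bar> > N * t * v}
     \<subseteq> {\<omega>\<in>space M. Z \<omega> \<ge> N * v * (1 + t)} \<union> {\<omega>\<in>space M. Z \<omega> \<le> N * v * (1 - t)}"
    by (auto simp: algebra_simps abs_if)
  have "measure M {\<omega>\<in>space M. \<bar>Z \<omega> - N * v\<bar> > N * t * v}
     \<le> measure M ({\<omega>\<in>space M. Z \<omega> \<ge> N * v * (1 + t)} \<union> {\<omega>\<in>space M. Z \<omega> \<le> N * v * (1 - t)})"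
    by (rule finite_measure_mono[OF sub]) auto
  also have "\<dots> \<le> measure M {\<omega>\<in>space M. Z \<omega> \<ge> N * v * (1 + t)} + measure M {\<omega>\<in>space M. Z \<omega> \<le> N * v * (1 - t)}"
    by (rule measure_subadditive) auto
  also have "\<dots> \<le> 2 * exp (- (N * t\<^sup>2 / 16))" using up lo by simp
  finally show ?thesis unfolding Z_def N_def .
qed

lemma inv_sqrt_approx:
  fixes s :: real assumes s: "\<bar>s\<bar> \<le> 1/2"
  shows "\<bar>1 / sqrt (1 + s) - 1 + s / 2\<bar> \<le> s\<^sup>2"
proof -
  define y where "y = sqrt (1 + s)"
  have ys: "y\<^sup>2 = 1 + s" using s by (simp add: y_def)
  have y0: "y > 0" using s by (simp add: y_def)
  have "(7/10)\<^sup>2 \<le> y\<^sup>2" using ys s by (simp add: power2_eq_square abs_le_iff)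
  then have y7: "7/10 \<le> y" using y0 by (simp add: power2_le_iff_abs_le)
  have sy: "s = y\<^sup>2 - 1" using ys by simp
  have eq: "1 / y - 1 + s / 2 = (y - 1)\<^sup>2 * (y + 2) / (2 * y)"
    using y0 unfolding sy by (simp add: field_simps power2_eq_square)
  have h1: "(y+1)\<^sup>2 \<ge> (17/10)\<^sup>2" using y7 by (intro power_mono) auto
  have h2: "2 * y * (y+1)\<^sup>2 \<ge> 2 * y * (17/10)\<^sup>2" using h1 y0 by (intro mult_left_mono) auto
  have h2': "2 * y * (17/10)\<^sup>2 = 289/50 * y" by (simp add: power2_eq_square)
  have h3: "y + 2 \<le> 2 * y * (y+1)\<^sup>2" using h2 h2' y7 by linarith
  have "(y + 2) / (2 * y) \<le> (y+1)\<^sup>2" using h3 y0 by (simp add: divide_le_eq mult.commute)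
  then have "(y - 1)\<^sup>2 * ((y + 2) / (2 * y)) \<le> (y - 1)\<^sup>2 * (y+1)\<^sup>2"
    by (intro mult_left_mono) auto
  moreover have "(y - 1)\<^sup>2 * (y+1)\<^sup>2 = s\<^sup>2" unfolding sy by (simp add: power2_eq_square algebra_simps)
  moreover have "0 \<le> (y - 1)\<^sup>2 * (y + 2) / (2 * y)" using y0 by simp
  ultimately show ?thesis unfolding y_def[symmetric] eq by simp
qed

lemma core_bound:
  fixes a b c r t :: real
  assumes a: "\<bar>a\<bar> \<le> t" and b: "\<bar>b\<bar> \<le> t" and c: "\<bar>c\<bar> \<le> t"
    and t: "0 \<le> t" "t \<le> 1/6" and r: "0 \<le> r" "r \<le> 1"
  shows "\<bar>(r + c) / sqrt ((1 + a) * (1 + b)) - (r + c - r * (a + b) / 2)\<bar> \<le> 21 * t\<^sup>2"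
proof -
  define s where "s = a + b + a * b"
  define E where "E = 1 / sqrt (1 + s) - 1 + s / 2"
  have ab: "\<bar>a * b\<bar> \<le> t * t" unfolding abs_mult using a b t by (intro mult_mono) auto
  have tt: "t * t \<le> t / 6" using mult_left_mono[of t "1/6" t] t by simp
  have sabs: "\<bar>s\<bar> \<le> 13/6 * t" using a b ab tt unfolding s_def abs_le_iff by linarith
  have sh: "\<bar>s\<bar> \<le> 1/2" using sabs t by linarith
  have q: "(1 + a) * (1 + b) = 1 + s" by (simp add: s_def algebra_simps)
  have E: "\<bar>E\<bar> \<le> s\<^sup>2" unfolding E_def by (rule inv_sqrt_approx[OF sh])
  have s2: "s\<^sup>2 \<le> (13/6 * t)\<^sup>2"
    using sabs by (metis abs_ge_zero power2_abs power_mono)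
  have rc: "\<bar>r + c\<bar> \<le> 7/6" using r c t unfolding abs_le_iff by linarith
  have id: "(r + c) / sqrt ((1 + a) * (1 + b)) - (r + c - r * (a + b) / 2)
       = (r + c) * E - c * (a + b) / 2 - (r + c) * (a * b) / 2"
    unfolding q E_def s_def by (simp add: field_simps)
  have t1: "\<bar>(r + c) * E\<bar> \<le> 7/6 * ((13/6 * t)\<^sup>2)"
    unfolding abs_mult using rc E s2 by (intro mult_mono) auto
  have t2: "\<bar>c * (a + b) / 2\<bar> \<le> t * (2 * t) / 2"
  proof -
    have "\<bar>c * (a + b)\<bar> \<le> t * (2 * t)" unfolding abs_mult using a b c t
      by (intro mult_mono) (auto simp: abs_le_iff)
    then show ?thesis by simp
  qed
  have t3: "\<bar>(r + c) * (a * b) / 2\<bar> \<le> 7/6 * (t * t) / 2"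
  proof -
    have "\<bar>(r + c) * (a * b)\<bar> \<le> 7/6 * (t * t)" unfolding abs_mult[of "r+c"] using rc ab
      by (intro mult_mono) auto
    then show ?thesis by simp
  qed
  have "\<bar>(r + c) * E - c * (a + b) / 2 - (r + c) * (a * b) / 2\<bar>
      \<le> 7/6 * ((13/6 * t)\<^sup>2) + t * (2 * t) / 2 + 7/6 * (t * t) / 2"
    using t1 t2 t3 by linarith
  also have "\<dots> \<le> 21 * t\<^sup>2" by (simp add: power2_eq_square)
  finally show ?thesis unfolding id .
qed

lemma det_bound:
  fixes A B Q n r t :: real
  assumes n: "n > 0" and r: "0 \<le> r" "r \<le> 1" and t: "0 \<le> t" "t \<le> 1/6"
    and A: "\<bar>A - n\<bar> \<le> n * t" and B: "\<bar>B - n\<bar> \<le> n * t" and Q: "\<bar>Q - n * r\<bar> \<le> n * t"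
  shows "\<bar>sqrt n * (Q / sqrt (A * B)) - (sqrt n * r + (1 / sqrt n) * (Q - r / 2 * (A + B)))\<bar>
         \<le> 21 * sqrt n * t\<^sup>2"
proof -
  define a where "a = A / n - 1"
  define b where "b = B / n - 1"
  define c where "c = Q / n - r"
  have Aa: "A = n * (1 + a)" and Bb: "B = n * (1 + b)" and Qc: "Q = n * (r + c)"
    using n by (auto simp: a_def b_def c_def field_simps)
  have aa: "\<bar>a\<bar> \<le> t"
  proof -
    have "A - n = n * a" unfolding Aa by (simp add: algebra_simps)
    then have "n * \<bar>a\<bar> \<le> n * t" using A n by (simp add: abs_mult)
    then show ?thesis using n by simp
  qed
  have bb: "\<bar>b\<bar> \<le> t"
  proof -
    have "B - n = n * b" unfolding Bb by (simp add: algebra_simps)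
    then have "n * \<bar>b\<bar> \<le> n * t" using B n by (simp add: abs_mult)
    then show ?thesis using n by simp
  qed
  have cc: "\<bar>c\<bar> \<le> t"
  proof -
    have "Q - n * r = n * c" unfolding Qc by (simp add: algebra_simps)
    then have "n * \<bar>c\<bar> \<le> n * t" using Q n by (simp add: abs_mult)
    then show ?thesis using n by simp
  qed
  have sq: "sqrt (A * B) = n * sqrt ((1 + a) * (1 + b))"
  proof -
    have "A * B = n\<^sup>2 * ((1 + a) * (1 + b))" unfolding Aa Bb by (simp add: power2_eq_square algebra_simps)
    then show ?thesis using n by (simp add: real_sqrt_mult)
  qed
  have pos: "sqrt ((1 + a) * (1 + b)) > 0" using aa bb t by (intro real_sqrt_gt_zero mult_pos_pos) (auto simp: abs_le_iff)
  have sn: "sqrt n > 0" "sqrt n * sqrt n = n" using n by auto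
  have "sqrt n * (Q / sqrt (A * B)) - (sqrt n * r + (1 / sqrt n) * (Q - r / 2 * (A + B)))
      = sqrt n * ((r + c) / sqrt ((1 + a) * (1 + b)) - (r + c - r * (a + b) / 2))"
  proof -
    have h1: "Q / sqrt (A * B) = (r + c) / sqrt ((1 + a) * (1 + b))" unfolding sq Qc using n by simp
    have h2: "Q - r / 2 * (A + B) = n * (c - r * (a + b) / 2)" unfolding Aa Bb Qc by (simp add: algebra_simps)
    have h3: "1 / sqrt n * (n * (c - r * (a + b) / 2)) = sqrt n * (c - r * (a + b) / 2)"
      using sn by (metis mult.assoc nonzero_mult_div_cancel_left divide_eq_eq less_irrefl mult_1 times_divide_eq_left)
    show ?thesis unfolding h1 h2 h3 by (simp add: algebra_simps)
  qed
  also have "\<bar>\<dots>\<bar> \<le> sqrt n * (21 * t\<^sup>2)"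
    unfolding abs_mult using sn core_bound[OF aa bb cc t r] by (simp add: mult_left_mono)
  finally show ?thesis by simp
qed

lemma quad_two:
  fixes S :: "nat \<Rightarrow> nat \<Rightarrow> real"
  assumes L: "finite L" "i \<in> L" "j \<in> L"
  shows "(\<Sum>l\<in>L. \<Sum>m\<in>L. ((if l = i then 1 else 0) + s * (if l = j then 1 else 0)) * S l m
            * ((if m = i then 1 else 0) + s * (if m = j then 1 else 0)))
       = S i i + s * S i j + s * S j i + s * s * S j j"
proof -
  have inner: "(\<Sum>m\<in>L. c * S l m * ((if m = i then 1 else 0) + s * (if m = j then 1 else 0)))
      = c * S l i + s * c * S l j" for c l
  proof -
    have "(\<Sum>m\<in>L. c * S l m * ((if m = i then 1 else 0) + s * (if m = j then 1 else 0)))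
        = (\<Sum>m\<in>L. (if m = i then c * S l m else 0)) + (\<Sum>m\<in>L. (if m = j then s * c * S l m else 0))"
      by (subst sum.distrib[symmetric]) (intro sum.cong, auto simp: algebra_simps)
    also have "\<dots> = c * S l i + s * c * S l j" using L by (simp add: sum.delta)
    finally show ?thesis .
  qed
  have "(\<Sum>l\<in>L. \<Sum>m\<in>L. ((if l = i then 1 else 0) + s * (if l = j then 1 else 0)) * S l m
            * ((if m = i then 1 else 0) + s * (if m = j then 1 else 0)))
     = (\<Sum>l\<in>L. ((if l = i then 1 else 0) + s * (if l = j then 1 else 0)) * S l i
            + s * ((if l = i then 1 else 0) + s * (if l = j then 1 else 0)) * S l j)"
    by (simp only: inner)
  also have "\<dots> = (\<Sum>l\<in>L. (if l = i then S l i + s * S l j else 0)) + (\<Sum>l\<in>L. (if l = j then s * S l i + s * s * S l j else 0))"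
    by (subst sum.distrib[symmetric]) (intro sum.cong, auto simp: algebra_simps)
  also have "\<dots> = S i i + s * S i j + s * S j i + s * s * S j j" using L by (simp add: sum.delta)
  finally show ?thesis .
qed

lemma Max_diff_bound:
  fixes f g :: "'b \<Rightarrow> real"
  assumes "finite S" "S \<noteq> {}" "\<And>x. x \<in> S \<Longrightarrow> \<bar>f x - g x\<bar> \<le> D"
  shows "\<bar>Max (f ` S) - Max (g ` S)\<bar> \<le> D"
proof -
  have "Max (f ` S) \<in> f ` S" using assms by (intro Max_in) auto
  then obtain x where x: "x \<in> S" "Max (f ` S) = f x" by auto
  have "Max (g ` S) \<in> g ` S" using assms by (intro Max_in) auto
  then obtain y where y: "y \<in> S" "Max (g ` S) = g y" by auto
  have "g x \<le> Max (g ` S)" using x assms by (intro Max_ge) auto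
  moreover have "f y \<le> Max (f ` S)" using y assms by (intro Max_ge) auto
  moreover have "\<bar>f x - g x\<bar> \<le> D" "\<bar>f y - g y\<bar> \<le> D" using x y assms by auto
  ultimately show ?thesis using x y by (simp add: abs_le_iff)
qed

definition sgb :: "bool \<Rightarrow> real" where "sgb b = (if b then 1 else -1)"

definition cf :: "nat \<Rightarrow> nat \<Rightarrow> bool \<Rightarrow> nat \<Rightarrow> real" where
  "cf i j b l = (if l = i then 1 else 0) + sgb b * (if l = j then 1 else 0)"

lemma lin_cf:
  assumes L: "finite L" "i \<in> L" "j \<in> L"
  shows "(\<Sum>l\<in>L. cf i j b l * f l) = f i + sgb b * f j"
proof -
  have "(\<Sum>l\<in>L. cf i j b l * f l) = (\<Sum>l\<in>L. (if l = i then f l else 0)) + (\<Sum>l\<in>L. (if l = j then sgb b * f l else 0))"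
    unfolding cf_def by (subst sum.distrib[symmetric]) (intro sum.cong, auto simp: algebra_simps)
  also have "\<dots> = f i + sgb b * f j" using L by (simp add: sum.delta)
  finally show ?thesis .
qed

lemma sgb_sq: "sgb b * sgb b = 1" by (simp add: sgb_def)

lemma ar1_sym: "ar1_cov r i j = ar1_cov r j i"
  unfolding ar1_cov_def by (simp add: abs_minus_commute)

lemma ar1_diag: "ar1_cov r i i = 1" unfolding ar1_cov_def by simp

lemma ar1_bounds: assumes "0 \<le> r" "r < 1" shows "0 \<le> ar1_cov r i j" "ar1_cov r i j \<le> 1"
  "i \<noteq> j \<Longrightarrow> ar1_cov r i j < 1"
proof -
  show "0 \<le> ar1_cov r i j" using assms unfolding ar1_cov_def by simp
  show "ar1_cov r i j \<le> 1" using assms unfolding ar1_cov_def by (simp add: power_le_one)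
  assume "i \<noteq> j"
  then have "nat \<bar>int i - int j\<bar> \<noteq> 0" by auto
  then show "ar1_cov r i j < 1" using assms unfolding ar1_cov_def by (simp add: power_less_one_iff)
qed

lemma var_cf: assumes "finite L" "i \<in> L" "j \<in> L"
  shows "(\<Sum>l\<in>L. \<Sum>m\<in>L. cf i j b l * ar1_cov r l m * cf i j b m) = 2 + 2 * sgb b * ar1_cov r i j"
proof -
  have "(\<Sum>l\<in>L. \<Sum>m\<in>L. cf i j b l * ar1_cov r l m * cf i j b m)
     = ar1_cov r i i + sgb b * ar1_cov r i j + sgb b * ar1_cov r j i + sgb b * sgb b * ar1_cov r j j"
    unfolding cf_def by (rule quad_two[OF assms])
  then show ?thesis by (simp add: sgb_sq ar1_diag ar1_sym[of r j i])
qed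

lemma bad_event:
  fixes Mn :: "'a measure" and Xn :: "nat \<Rightarrow> nat \<Rightarrow> 'a \<Rightarrow> real" and P n :: nat
  assumes prob: "prob_space Mn"
    and gauss: "\<And>k. k \<in> {1..n} \<Longrightarrow> centered_gaussian_vector Mn P (ar1_cov r) (\<lambda>\<omega> i. Xn k i \<omega>)"
    and indep: "prob_space.indep_vars Mn (\<lambda>_. PiM {1..P} (\<lambda>_. borel))
        (\<lambda>k \<omega>. restrict (\<lambda>i. Xn k i \<omega>) {1..P}) {1..n}"
    and r: "0 \<le> r" "r < 1" and t: "0 < t" "t \<le> 1"
    and q: "i \<in> {1..P}" "j \<in> {1..P}" "b \<or> i \<noteq> j"
  shows "{\<omega>\<in>space Mn. \<bar>(\<Sum>k\<in>{1..n}. (Xn k i \<omega> + sgb b * Xn k j \<omega>)\<^sup>2) - real n * (2 + 2 * sgb b * ar1_cov r i j)\<bar>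
            > real n * t * (2 + 2 * sgb b * ar1_cov r i j)} \<in> sets Mn"
    and "measure Mn {\<omega>\<in>space Mn. \<bar>(\<Sum>k\<in>{1..n}. (Xn k i \<omega> + sgb b * Xn k j \<omega>)\<^sup>2) - real n * (2 + 2 * sgb b * ar1_cov r i j)\<bar>
            > real n * t * (2 + 2 * sgb b * ar1_cov r i j)} \<le> 2 * exp (- (real n * t\<^sup>2 / 16))"
proof -
  interpret prob_space Mn by (rule prob)
  define v where "v = 2 + 2 * sgb b * ar1_cov r i j"
  define Y where "Y = (\<lambda>k \<omega>. Xn k i \<omega> + sgb b * Xn k j \<omega>)"
  have v: "v > 0"
  proof (cases b)
    case True then show ?thesis using ar1_bounds[OF r, of i j] by (simp add: v_def sgb_def)
  next
    case False then show ?thesis using ar1_bounds[OF r, of i j] q by (simp add: v_def sgb_def)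
  qed
  have fin: "finite {1..P}" by simp
  have Xm: "k \<in> {1..n} \<Longrightarrow> l \<in> {1..P} \<Longrightarrow> (\<lambda>\<omega>. Xn k l \<omega>) \<in> borel_measurable Mn" for k l
    using gauss unfolding centered_gaussian_vector_def by blast
  have Ym: "k \<in> {1..n} \<Longrightarrow> Y k \<in> borel_measurable Mn" for k
    unfolding Y_def using Xm[of k i] Xm[of k j] q by (intro borel_measurable_add borel_measurable_times) auto
  have dist: "distr Mn borel (Y k) = density lborel (normal_density 0 (sqrt v))" if k: "k \<in> {1..n}" for k
  proof -
    have "distr Mn borel (\<lambda>\<omega>. \<Sum>l=1..P. cf i j b l * Xn k l \<omega>)
         = centered_normal (\<Sum>l=1..P. \<Sum>m=1..P. cf i j b l * ar1_cov r l m * cf i j b m)"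
      using gauss[OF k] unfolding centered_gaussian_vector_def by blast
    moreover have "(\<lambda>\<omega>. \<Sum>l=1..P. cf i j b l * Xn k l \<omega>) = Y k"
    proof (intro ext)
      fix \<omega> show "(\<Sum>l=1..P. cf i j b l * Xn k l \<omega>) = Y k \<omega>"
        unfolding Y_def by (rule lin_cf[where f="\<lambda>l. Xn k l \<omega>"]) (use q in auto)
    qed
    moreover have "(\<Sum>l=1..P. \<Sum>m=1..P. cf i j b l * ar1_cov r l m * cf i j b m) = v"
      unfolding v_def using q by (intro var_cf) auto
    ultimately show ?thesis using v by (simp add: centered_normal_def)
  qed
  have ind: "indep_vars (\<lambda>_. borel) Y {1..n}"
  proof -
    have "indep_vars (\<lambda>_. borel) (\<lambda>k \<omega>. (\<lambda>x. \<Sum>l\<in>{1..P}. cf i j b l * x l) (restrict (\<lambda>i. Xn k i \<omega>) {1..P})) {1..n}"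
      by (rule indep_vars_compose2[OF indep]) measurable
    moreover have "(\<lambda>\<omega>. (\<lambda>x. \<Sum>l\<in>{1..P}. cf i j b l * x l) (restrict (\<lambda>i. Xn k i \<omega>) {1..P})) = Y k" for k
    proof (intro ext)
      fix \<omega>
      have "(\<Sum>l\<in>{1..P}. cf i j b l * restrict (\<lambda>i. Xn k i \<omega>) {1..P} l) = (\<Sum>l\<in>{1..P}. cf i j b l * Xn k l \<omega>)"
        by (intro sum.cong) auto
      also have "\<dots> = Y k \<omega>"
        unfolding Y_def by (rule lin_cf[where f="\<lambda>l. Xn k l \<omega>"]) (use q in auto)
      finally show "(\<lambda>x. \<Sum>l\<in>{1..P}. cf i j b l * x l) (restrict (\<lambda>i. Xn k i \<omega>) {1..P}) = Y k \<omega>" by simp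
    qed
    ultimately show ?thesis by simp
  qed
  define Z where "Z = (\<lambda>\<omega>. \<Sum>k\<in>{1..n}. (Y k \<omega>)\<^sup>2)"
  have Zm[measurable]: "Z \<in> borel_measurable Mn"
    unfolding Z_def using Ym by (intro borel_measurable_sum borel_measurable_power) auto
  have Zs: "{\<omega>\<in>space Mn. \<bar>Z \<omega> - real n * v\<bar> > real n * t * v} \<in> sets Mn" by measurable
  show "{\<omega>\<in>space Mn. \<bar>(\<Sum>k\<in>{1..n}. (Xn k i \<omega> + sgb b * Xn k j \<omega>)\<^sup>2) - real n * (2 + 2 * sgb b * ar1_cov r i j)\<bar>
            > real n * t * (2 + 2 * sgb b * ar1_cov r i j)} \<in> sets Mn"
  proof -
    have ZZ: "Z = (\<lambda>\<omega>. \<Sum>k\<in>{1..n}. (Xn k i \<omega> + sgb b * Xn k j \<omega>)\<^sup>2)" unfolding Z_def Y_def ..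
    show ?thesis using Zs unfolding ZZ v_def .
  qed
  have "measure Mn {\<omega>\<in>space Mn. \<bar>(\<Sum>k\<in>{1..n}. (Y k \<omega>)\<^sup>2) - real (card {1..n}) * v\<bar> > real (card {1..n}) * t * v}
         \<le> 2 * exp (- (real (card {1..n}) * t\<^sup>2 / 16))"
    by (rule chi_tail[OF prob _ ind dist v t]) auto
  then show "measure Mn {\<omega>\<in>space Mn. \<bar>(\<Sum>k\<in>{1..n}. (Xn k i \<omega> + sgb b * Xn k j \<omega>)\<^sup>2) - real n * (2 + 2 * sgb b * ar1_cov r i j)\<bar>
            > real n * t * (2 + 2 * sgb b * ar1_cov r i j)} \<le> 2 * exp (- (real n * t\<^sup>2 / 16))"
    unfolding Y_def v_def card_atLeastAtMost by simp
qed

lemma sum_sq_expand: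
  fixes f g :: "nat \<Rightarrow> real" and s :: real
  shows "(\<Sum>k\<in>K. (f k + s * g k)\<^sup>2) = (\<Sum>k\<in>K. (f k)\<^sup>2) + 2 * s * (\<Sum>k\<in>K. f k * g k) + s * s * (\<Sum>k\<in>K. (g k)\<^sup>2)"
proof -
  have "(\<Sum>k\<in>K. (f k + s * g k)\<^sup>2) = (\<Sum>k\<in>K. (f k)\<^sup>2 + (2 * s) * (f k * g k) + (s * s) * (g k)\<^sup>2)"
    by (intro sum.cong) (auto simp: power2_eq_square algebra_simps)
  then show ?thesis by (simp add: sum.distrib sum_distrib_left)
qed

lemma good_bound:
  fixes x :: "nat \<Rightarrow> nat \<Rightarrow> real" and n P :: nat
  assumes n: "n \<ge> 1" and P: "P \<ge> 2" and r: "0 \<le> r" "r < 1" and t: "0 \<le> t" "t \<le> 1/6"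
    and good: "\<And>i j b. i \<in> {1..P} \<Longrightarrow> j \<in> {1..P} \<Longrightarrow> b \<or> i \<noteq> j \<Longrightarrow>
      \<bar>(\<Sum>k\<in>{1..n}. (x k i + sgb b * x k j)\<^sup>2) - real n * (2 + 2 * sgb b * ar1_cov r i j)\<bar>
        \<le> real n * t * (2 + 2 * sgb b * ar1_cov r i j)"
  shows "\<bar>Max ((\<lambda>(i, j). sqrt (real n) * rho_hat n x i j) ` {(i, j). 1 \<le> i \<and> i < j \<and> j \<le> P})
      - Max ((\<lambda>(i, j). sqrt (real n) * ar1_cov r i j
               + (1 / sqrt (real n)) * (\<Sum>k=1..n.
                   x k i * x k j - ar1_cov r i j / 2 * ((x k i)\<^sup>2 + (x k j)\<^sup>2)))
               ` {(i, j). 1 \<le> i \<and> i < j \<and> j \<le> P})\<bar> \<le> 21 * sqrt (real n) * t\<^sup>2"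
proof (rule Max_diff_bound)
  show "finite {(i, j). 1 \<le> i \<and> i < j \<and> j \<le> P}"
    by (rule finite_subset[of _ "{1..P} \<times> {1..P}"]) auto
  have "(1, 2) \<in> {(i, j). 1 \<le> i \<and> i < j \<and> j \<le> (P::nat)}" using P by auto
  then show "{(i, j). 1 \<le> i \<and> i < j \<and> j \<le> P} \<noteq> {}" by blast
  fix ij assume ij: "ij \<in> {(i, j). 1 \<le> i \<and> i < j \<and> j \<le> P}"
  obtain i j where ijd: "ij = (i, j)" and i: "i \<in> {1..P}" and j: "j \<in> {1..P}" and ilj: "i < j"
    using ij by auto
  define A where "A = (\<Sum>k\<in>{1..n}. (x k i)\<^sup>2)"
  define B where "B = (\<Sum>k\<in>{1..n}. (x k j)\<^sup>2)"
  define Q where "Q = (\<Sum>k\<in>{1..n}. x k i * x k j)"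
  define \<rho> where "\<rho> = ar1_cov r i j"
  have rb: "0 \<le> \<rho>" "\<rho> \<le> 1" using ar1_bounds[OF r, of i j] by (auto simp: \<rho>_def)
  have nn: "real n > 0" using n by simp
  have Ab: "\<bar>A - real n\<bar> \<le> real n * t" if "l \<in> {1..P}" "A = (\<Sum>k\<in>{1..n}. (x k l)\<^sup>2)" for A l
  proof -
    have "\<bar>(\<Sum>k\<in>{1..n}. (x k l + sgb True * x k l)\<^sup>2) - real n * (2 + 2 * sgb True * ar1_cov r l l)\<bar>
        \<le> real n * t * (2 + 2 * sgb True * ar1_cov r l l)" using good[OF that(1) that(1)] by simp
    moreover have "(\<Sum>k\<in>{1..n}. (x k l + sgb True * x k l)\<^sup>2) = 4 * A"
      unfolding that(2) sum_sq_expand by (simp add: sgb_def power2_eq_square)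
    ultimately have "\<bar>4 * A - 4 * real n\<bar> \<le> 4 * (real n * t)" by (simp add: sgb_def ar1_diag)
    then show ?thesis by simp
  qed
  have A: "\<bar>A - real n\<bar> \<le> real n * t" by (rule Ab[OF i]) (simp add: A_def)
  have B: "\<bar>B - real n\<bar> \<le> real n * t" by (rule Ab[OF j]) (simp add: B_def)
  have p1: "\<bar>(A + 2 * Q + B) - real n * (2 + 2 * \<rho>)\<bar> \<le> real n * t * (2 + 2 * \<rho>)"
  proof -
    have "(\<Sum>k\<in>{1..n}. (x k i + sgb True * x k j)\<^sup>2) = A + 2 * Q + B"
      unfolding sum_sq_expand A_def B_def Q_def by (simp add: sgb_def)
    then show ?thesis using good[OF i j, of True] by (simp add: sgb_def \<rho>_def)
  qed
  have p2: "\<bar>(A - 2 * Q + B) - real n * (2 - 2 * \<rho>)\<bar> \<le> real n * t * (2 - 2 * \<rho>)"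
  proof -
    have "(\<Sum>k\<in>{1..n}. (x k i + sgb False * x k j)\<^sup>2) = A - 2 * Q + B"
      unfolding sum_sq_expand A_def B_def Q_def by (simp add: sgb_def)
    then show ?thesis using good[OF i j, of False] ilj by (simp add: sgb_def \<rho>_def)
  qed
  have Qb: "\<bar>Q - real n * \<rho>\<bar> \<le> real n * t"
    using p1 p2 unfolding abs_le_iff by (simp add: algebra_simps)
  have rh: "rho_hat n x i j = Q / sqrt (A * B)"
    unfolding rho_hat_def A_def B_def Q_def by simp
  have sm: "(\<Sum>k=1..n. x k i * x k j - \<rho> / 2 * ((x k i)\<^sup>2 + (x k j)\<^sup>2)) = Q - \<rho> / 2 * (A + B)"
    unfolding A_def B_def Q_def by (simp add: sum_subtractf sum.distrib sum_distrib_left algebra_simps)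
  show "\<bar>(case ij of (i, j) \<Rightarrow> sqrt (real n) * rho_hat n x i j) -
          (case ij of (i, j) \<Rightarrow> sqrt (real n) * ar1_cov r i j + 1 / sqrt (real n) *
              (\<Sum>k = 1..n. x k i * x k j - ar1_cov r i j / 2 * ((x k i)\<^sup>2 + (x k j)\<^sup>2)))\<bar>
        \<le> 21 * sqrt (real n) * t\<^sup>2"
    unfolding ijd prod.case rh \<rho>_def[symmetric] sm
    by (rule det_bound[OF nn rb t A B Qb])
qed

lemma final_arith:
  fixes D t L n C :: real
  assumes D: "\<bar>D\<bar> \<le> 21 * sqrt n * t\<^sup>2" and t2: "t\<^sup>2 = 64 * L / n" and L: "L > 0" and n: "n > 0" and C: "C \<ge> 1344"
  shows "\<not> (C < \<bar>D / (L / sqrt n)\<bar>)"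
proof -
  have sn: "sqrt n > 0" "sqrt n * sqrt n = n" using n by auto
  have "21 * sqrt n * t\<^sup>2 = 1344 * (L / sqrt n)"
    unfolding t2 using sn by (simp add: field_simps)
  then have "\<bar>D\<bar> \<le> 1344 * (L / sqrt n)" using D by simp
  moreover have a: "L / sqrt n > 0" using L sn by simp
  ultimately have "\<bar>D\<bar> / (L / sqrt n) \<le> 1344" by (simp only: pos_divide_le_eq)
  moreover have "\<bar>D / (L / sqrt n)\<bar> = \<bar>D\<bar> / (L / sqrt n)" by (simp only: abs_divide[of D] abs_of_pos[OF a])
  ultimately have "\<bar>D / (L / sqrt n)\<bar> \<le> 1344" by simp
  then show ?thesis using C by simp
qed

lemma key_n:
  fixes M :: "'a measure" and X :: "nat \<Rightarrow> nat \<Rightarrow> 'a \<Rightarrow> real" and n P :: nat and r C :: real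
  assumes prob: "prob_space M"
    and gauss: "\<And>k. k \<in> {1..n} \<Longrightarrow> centered_gaussian_vector M P (ar1_cov r) (\<lambda>\<omega> i. X k i \<omega>)"
    and indep: "prob_space.indep_vars M (\<lambda>_. PiM {1..P} (\<lambda>_. borel))
        (\<lambda>k \<omega>. restrict (\<lambda>i. X k i \<omega>) {1..P}) {1..n}"
    and r: "0 \<le> r" "r < 1" and n: "n \<ge> 1" and P: "P \<ge> 2" and lnP: "ln (real P) \<le> real n / 2304"
    and C: "C \<ge> 1344"
  shows "measure M {\<omega> \<in> space M. \<bar>(Max ((\<lambda>(i, j). sqrt (real n) * rho_hat n (\<lambda>k l. X k l \<omega>) i j)
               ` {(i, j). 1 \<le> i \<and> i < j \<and> j \<le> P})
      - Max ((\<lambda>(i, j). sqrt (real n) * ar1_cov r i j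
               + (1 / sqrt (real n)) * (\<Sum>k=1..n.
                   X k i \<omega> * X k j \<omega>
                   - ar1_cov r i j / 2 * ((X k i \<omega>)\<^sup>2 + (X k j \<omega>)\<^sup>2)))
               ` {(i, j). 1 \<le> i \<and> i < j \<and> j \<le> P})) / (ln (real P) / sqrt (real n))\<bar> > C}
     \<le> 4 / (real P)\<^sup>2"
proof -
  interpret prob_space M by (rule prob)
  define L where "L = ln (real P)"
  have Lp: "L > 0" using P by (simp add: L_def)
  have nn: "real n > 0" using n by simp
  define t where "t = 8 * sqrt (L / real n)"
  have t0: "t > 0" using Lp nn by (simp add: t_def)
  have t2: "t\<^sup>2 = 64 * L / real n" using Lp nn by (simp add: t_def power_mult_distrib)
  have "t\<^sup>2 \<le> (1/6)\<^sup>2" unfolding t2 using lnP nn by (simp add: L_def field_simps)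
  then have t6: "t \<le> 1/6" using t0 by (simp add: power2_le_iff_abs_le)
  define J where "J = {(i, j, b). i \<in> {1..P} \<and> j \<in> {1..P} \<and> (b \<or> i \<noteq> j)}"
  define E where "E = (\<lambda>(i, j, b). {\<omega>\<in>space M. \<bar>(\<Sum>k\<in>{1..n}. (X k i \<omega> + sgb b * X k j \<omega>)\<^sup>2) - real n * (2 + 2 * sgb b * ar1_cov r i j)\<bar>
            > real n * t * (2 + 2 * sgb b * ar1_cov r i j)})"
  have Jsub: "J \<subseteq> {1..P} \<times> {1..P} \<times> UNIV" by (auto simp: J_def)
  have finJ: "finite J" by (rule finite_subset[OF Jsub]) auto
  have cardJ: "card J \<le> 2 * P * P"
  proof -
    have "card J \<le> card ({1..P} \<times> {1..P} \<times> (UNIV :: bool set))" by (rule card_mono[OF _ Jsub]) auto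
    also have "\<dots> = 2 * P * P" by (simp add: card_cartesian_product)
    finally show ?thesis .
  qed
  have Ebd: "E q \<in> sets M \<and> measure M (E q) \<le> 2 * exp (- (real n * t\<^sup>2 / 16))" if q: "q \<in> J" for q
  proof -
    obtain i j b where qd: "q = (i, j, b)" and i: "i \<in> {1..P}" and j: "j \<in> {1..P}" and b: "b \<or> i \<noteq> j"
      using q by (auto simp: J_def)
    show ?thesis
    proof -
      have t1: "t \<le> 1" using t6 by simp
      note bb = bad_event[OF prob gauss indep r t0 t1 i j b]
      show ?thesis unfolding qd E_def prod.case using bb by blast
    qed
  qed
  define Bad where "Bad = (\<Union>q\<in>J. E q)"
  have Bads: "Bad \<in> sets M" unfolding Bad_def using Ebd finJ by (intro sets.finite_UN) auto
  have ex: "exp (- (real n * t\<^sup>2 / 16)) = 1 / (real P)^4"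
  proof -
    have "real n * t\<^sup>2 / 16 = 4 * L" unfolding t2 using nn by simp
    moreover have "exp (4 * L) = (real P)^4" unfolding L_def using P
      by (simp add: exp_of_nat_mult[of 4, simplified])
    ultimately show ?thesis by (simp add: exp_minus inverse_eq_divide)
  qed
  have "measure M Bad \<le> (\<Sum>q\<in>J. measure M (E q))"
    unfolding Bad_def using finJ Ebd by (intro measure_UNION_le) auto
  also have "\<dots> \<le> (\<Sum>q\<in>J. 2 * exp (- (real n * t\<^sup>2 / 16)))"
    using Ebd by (intro sum_mono) auto
  also have "\<dots> = real (card J) * (2 / (real P)^4)" by (simp add: ex)
  also have "\<dots> \<le> real (2 * P * P) * (2 / (real P)^4)"
  proof (rule mult_right_mono)
    show "real (card J) \<le> real (2 * P * P)" using cardJ by (simp only: of_nat_le_iff)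
  qed simp
  also have "\<dots> = 4 / (real P)\<^sup>2" using P by (simp add: power2_eq_square power4_eq_xxxx field_simps)
  finally have mB: "measure M Bad \<le> 4 / (real P)\<^sup>2" .
  have sub: "{\<omega> \<in> space M. \<bar>(Max ((\<lambda>(i, j). sqrt (real n) * rho_hat n (\<lambda>k l. X k l \<omega>) i j)
               ` {(i, j). 1 \<le> i \<and> i < j \<and> j \<le> P})
      - Max ((\<lambda>(i, j). sqrt (real n) * ar1_cov r i j
               + (1 / sqrt (real n)) * (\<Sum>k=1..n.
                   X k i \<omega> * X k j \<omega>
                   - ar1_cov r i j / 2 * ((X k i \<omega>)\<^sup>2 + (X k j \<omega>)\<^sup>2)))
               ` {(i, j). 1 \<le> i \<and> i < j \<and> j \<le> P})) / (ln (real P) / sqrt (real n))\<bar> > C} \<subseteq> Bad"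
  proof (intro subsetI, rule ccontr)
    fix \<omega> assume om: "\<omega> \<in> {\<omega> \<in> space M. \<bar>(Max ((\<lambda>(i, j). sqrt (real n) * rho_hat n (\<lambda>k l. X k l \<omega>) i j)
               ` {(i, j). 1 \<le> i \<and> i < j \<and> j \<le> P})
      - Max ((\<lambda>(i, j). sqrt (real n) * ar1_cov r i j
               + (1 / sqrt (real n)) * (\<Sum>k=1..n.
                   X k i \<omega> * X k j \<omega>
                   - ar1_cov r i j / 2 * ((X k i \<omega>)\<^sup>2 + (X k j \<omega>)\<^sup>2)))
               ` {(i, j). 1 \<le> i \<and> i < j \<and> j \<le> P})) / (ln (real P) / sqrt (real n))\<bar> > C}"
      and nb: "\<omega> \<notin> Bad"
    have good: "\<bar>(\<Sum>k\<in>{1..n}. (X k i \<omega> + sgb b * X k j \<omega>)\<^sup>2) - real n * (2 + 2 * sgb b * ar1_cov r i j)\<bar>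
        \<le> real n * t * (2 + 2 * sgb b * ar1_cov r i j)"
      if "i \<in> {1..P}" "j \<in> {1..P}" "b \<or> i \<noteq> j" for i j b
    proof -
      have "(i, j, b) \<in> J" using that by (simp add: J_def)
      then have "\<omega> \<notin> E (i, j, b)" using nb by (auto simp: Bad_def)
      moreover have "\<omega> \<in> space M" using om by blast
      ultimately show ?thesis unfolding E_def prod.case by (simp add: not_less)
    qed
    note gb = good_bound[where x="\<lambda>k l. X k l \<omega>", OF n P r less_imp_le[OF t0] t6 good]
    show False using final_arith[OF gb t2 Lp nn C, unfolded L_def] om by blast
  qed
  have "measure M {\<omega> \<in> space M. \<bar>(Max ((\<lambda>(i, j). sqrt (real n) * rho_hat n (\<lambda>k l. X k l \<omega>) i j)
               ` {(i, j). 1 \<le> i \<and> i < j \<and> j \<le> P})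
      - Max ((\<lambda>(i, j). sqrt (real n) * ar1_cov r i j
               + (1 / sqrt (real n)) * (\<Sum>k=1..n.
                   X k i \<omega> * X k j \<omega>
                   - ar1_cov r i j / 2 * ((X k i \<omega>)\<^sup>2 + (X k j \<omega>)\<^sup>2)))
               ` {(i, j). 1 \<le> i \<and> i < j \<and> j \<le> P})) / (ln (real P) / sqrt (real n))\<bar> > C} \<le> measure M Bad"
    by (rule finite_measure_mono[OF sub Bads])
  then show ?thesis using mB by linarith
qed

theorem mainTheorem12:
  fixes M :: "nat \<Rightarrow> 'a measure"
    and X :: "nat \<Rightarrow> nat \<Rightarrow> nat \<Rightarrow> 'a \<Rightarrow> real"
    and p :: "nat \<Rightarrow> nat"
    and r :: "nat \<Rightarrow> real"
  assumes prob: "\<And>n. prob_space (M n)"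
    and gauss: "\<And>n k. k \<in> {1..n} \<Longrightarrow>
        centered_gaussian_vector (M n) (p n) (ar1_cov (r n)) (\<lambda>\<omega> i. X n k i \<omega>)"
    and indep: "\<And>n. prob_space.indep_vars (M n) (\<lambda>_. PiM {1..p n} (\<lambda>_. borel))
        (\<lambda>k \<omega>. restrict (\<lambda>i. X n k i \<omega>) {1..p n}) {1..n}"
    and r_range: "\<And>n. 0 \<le> r n \<and> r n < 1"
    and p_inf: "filterlim p at_top sequentially"
    and logp: "(\<lambda>n. ln (real (p n))) \<in> o(\<lambda>n. real n)"
  shows "bounded_in_prob M
     (\<lambda>n \<omega>.
        Max ((\<lambda>(i, j). sqrt (real n) * rho_hat n (\<lambda>k l. X n k l \<omega>) i j)
               ` {(i, j). 1 \<le> i \<and> i < j \<and> j \<le> p n})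
      - Max ((\<lambda>(i, j). sqrt (real n) * ar1_cov (r n) i j
               + (1 / sqrt (real n)) * (\<Sum>k=1..n.
                   X n k i \<omega> * X n k j \<omega>
                   - ar1_cov (r n) i j / 2 * ((X n k i \<omega>)\<^sup>2 + (X n k j \<omega>)\<^sup>2)))
               ` {(i, j). 1 \<le> i \<and> i < j \<and> j \<le> p n}))
     (\<lambda>n. ln (real (p n)) / sqrt (real n))"
proof -
  have evn: "eventually (\<lambda>n. n \<ge> 1 \<and> p n \<ge> 2 \<and> ln (real (p n)) \<le> real n / 2304) sequentially"
  proof -
    have e1: "eventually (\<lambda>n. n \<ge> 1) sequentially" by (rule eventually_ge_at_top)
    have e2: "eventually (\<lambda>n. p n \<ge> 2) sequentially" using p_inf by (simp add: filterlim_at_top)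
    have e3: "eventually (\<lambda>n. norm (ln (real (p n))) \<le> (1/2304) * norm (real n)) sequentially"
      using landau_o.smallD[OF logp, of "1/2304"] by simp
    show ?thesis using e1 e2 e3 by eventually_elim auto
  qed
  have lim0: "(\<lambda>n. ereal (4 / (real (p n))\<^sup>2)) \<longlonglongrightarrow> ereal 0"
  proof -
    have "filterlim (\<lambda>n. real (p n)) at_top sequentially"
      by (rule filterlim_compose[OF filterlim_real_sequentially p_inf])
    then have "filterlim (\<lambda>n. (real (p n))\<^sup>2) at_top sequentially"
      by (rule filterlim_pow_at_top[of 2, simplified])
    then have "(\<lambda>n. 4 / (real (p n))\<^sup>2) \<longlonglongrightarrow> 0"
      by (intro tendsto_divide_0[OF tendsto_const] filterlim_at_top_imp_at_infinity)
    then show ?thesis by (rule tendsto_ereal)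
  qed
  have key: "limsup (\<lambda>n. ereal (measure (M n)
          {\<omega> \<in> space (M n). \<bar>(Max ((\<lambda>(i, j). sqrt (real n) * rho_hat n (\<lambda>k l. X n k l \<omega>) i j)
               ` {(i, j). 1 \<le> i \<and> i < j \<and> j \<le> p n})
      - Max ((\<lambda>(i, j). sqrt (real n) * ar1_cov (r n) i j
               + (1 / sqrt (real n)) * (\<Sum>k=1..n.
                   X n k i \<omega> * X n k j \<omega>
                   - ar1_cov (r n) i j / 2 * ((X n k i \<omega>)\<^sup>2 + (X n k j \<omega>)\<^sup>2)))
               ` {(i, j). 1 \<le> i \<and> i < j \<and> j \<le> p n})) / (ln (real (p n)) / sqrt (real n))\<bar> > C})) = 0"
    if C: "C \<ge> 1344" for C
  proof (rule antisym)
    have "limsup (\<lambda>n. ereal (measure (M n)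
          {\<omega> \<in> space (M n). \<bar>(Max ((\<lambda>(i, j). sqrt (real n) * rho_hat n (\<lambda>k l. X n k l \<omega>) i j)
               ` {(i, j). 1 \<le> i \<and> i < j \<and> j \<le> p n})
      - Max ((\<lambda>(i, j). sqrt (real n) * ar1_cov (r n) i j
               + (1 / sqrt (real n)) * (\<Sum>k=1..n.
                   X n k i \<omega> * X n k j \<omega>
                   - ar1_cov (r n) i j / 2 * ((X n k i \<omega>)\<^sup>2 + (X n k j \<omega>)\<^sup>2)))
               ` {(i, j). 1 \<le> i \<and> i < j \<and> j \<le> p n})) / (ln (real (p n)) / sqrt (real n))\<bar> > C}))
       \<le> limsup (\<lambda>n. ereal (4 / (real (p n))\<^sup>2))"
    proof (rule Limsup_mono)
      show "\<forall>\<^sub>F n in sequentially. ereal (measure (M n)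
          {\<omega> \<in> space (M n). \<bar>(Max ((\<lambda>(i, j). sqrt (real n) * rho_hat n (\<lambda>k l. X n k l \<omega>) i j)
               ` {(i, j). 1 \<le> i \<and> i < j \<and> j \<le> p n})
      - Max ((\<lambda>(i, j). sqrt (real n) * ar1_cov (r n) i j
               + (1 / sqrt (real n)) * (\<Sum>k=1..n.
                   X n k i \<omega> * X n k j \<omega>
                   - ar1_cov (r n) i j / 2 * ((X n k i \<omega>)\<^sup>2 + (X n k j \<omega>)\<^sup>2)))
               ` {(i, j). 1 \<le> i \<and> i < j \<and> j \<le> p n})) / (ln (real (p n)) / sqrt (real n))\<bar> > C})
         \<le> ereal (4 / (real (p n))\<^sup>2)"
        using evn
      proof eventually_elim
        case (elim n)
        have rr: "0 \<le> r n" "r n < 1" using r_range[of n] by auto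
        show ?case
          using key_n[where M="M n" and X="X n" and n=n and P="p n" and r="r n" and C=C,
                 OF prob gauss indep rr _ _ _ C] elim by simp
      qed
    qed
    also have "\<dots> = 0"
      using lim0 by (intro lim_imp_Limsup) (auto simp: zero_ereal_def)
    finally show "limsup (\<lambda>n. ereal (measure (M n)
          {\<omega> \<in> space (M n). \<bar>(Max ((\<lambda>(i, j). sqrt (real n) * rho_hat n (\<lambda>k l. X n k l \<omega>) i j)
               ` {(i, j). 1 \<le> i \<and> i < j \<and> j \<le> p n})
      - Max ((\<lambda>(i, j). sqrt (real n) * ar1_cov (r n) i j
               + (1 / sqrt (real n)) * (\<Sum>k=1..n.
                   X n k i \<omega> * X n k j \<omega>
                   - ar1_cov (r n) i j / 2 * ((X n k i \<omega>)\<^sup>2 + (X n k j \<omega>)\<^sup>2)))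
               ` {(i, j). 1 \<le> i \<and> i < j \<and> j \<le> p n})) / (ln (real (p n)) / sqrt (real n))\<bar> > C})) \<le> 0" .
    show "0 \<le> limsup (\<lambda>n. ereal (measure (M n)
          {\<omega> \<in> space (M n). \<bar>(Max ((\<lambda>(i, j). sqrt (real n) * rho_hat n (\<lambda>k l. X n k l \<omega>) i j)
               ` {(i, j). 1 \<le> i \<and> i < j \<and> j \<le> p n})
      - Max ((\<lambda>(i, j). sqrt (real n) * ar1_cov (r n) i j
               + (1 / sqrt (real n)) * (\<Sum>k=1..n.
                   X n k i \<omega> * X n k j \<omega>
                   - ar1_cov (r n) i j / 2 * ((X n k i \<omega>)\<^sup>2 + (X n k j \<omega>)\<^sup>2)))
               ` {(i, j). 1 \<le> i \<and> i < j \<and> j \<le> p n})) / (ln (real (p n)) / sqrt (real n))\<bar> > C}))"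
      by (rule le_Limsup) auto
  qed
  show ?thesis unfolding bounded_in_prob_def
    by (rule tendsto_eventually) (rule eventually_mono[OF eventually_ge_at_top[of 1344]], rule key)
qed

end
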